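(* Let $\kappa$ be an ergodic $S$-invariant probability measure on $\{0,1\}^{\mathbb Z}$ such that for every strictly increasing sequence of natural numbers $t_1<t_2<\cdots$ one has $\kappa(\{v\in\{0,1\}^{\mathbb Z}: v(t_1)=v(t_2)=\cdots=0\})=0$. Then $(\nu_{\mathscr B}\ast\kappa)(Y)=1$.
   Context: Let $S$ be the shift on $\{0,1\}^{\mathbb Z}$, $(Sx)(n)=x(n+1)$. Let $\mathscr{B}=\{b_1,b_2,\dots\}\subset\{2,3,\dots\}$ with $\gcd(b_i,b_j)=1$ for $i\ne j$ and $\sum_i1/b_i<\infty$. Define $\eta(n)=1$ iff $b_i\nmid n$ for all $i$ (else $0$), and let $X_\eta$ be the set of $y\in\{0,1\}^{\mathbb Z}$ all of whose finite blocks occur in $\eta$; equivalently $y\in X_\eta$ iff $|\mathrm{supp}(y)\bmod b_i|<b_i$ for all $i$, where $\mathrm{supp}(y)=\{n:y(n)=1\}$. Let $Y=\{x\in X_\eta: |\mathrm{supp}(x)\bmod b_i|=b_i-1\ \text{for all } i\}$. Let $\Omega=\prod_i\mathbb Z/b_i\mathbb Z$ with Haar measure $\mathbb P$, $\varphi(\omega)(n)=1$ iff $\omega(i)+n\not\equiv0\pmod{b_i}$ for all $i$, and $\nu_{\mathscr B}=\varphi_*\mathbb P$ (Mirsky measure). With $M:X_\eta\times\{0,1\}^{\mathbb Z}\to X_\eta$, $M(x,u)(n)=x(n)u(n)$, set $\nu_{\mathscr B}\ast\kappa:=M_*(\nu_{\mathscr B}\otimes\kappa)$. *)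

theory Defs
  imports "HOL-Probability.Probability"
begin

text \<open>Points of the full shift: bool-valued functions on the integers (True = 1, False = 0).\<close>

definition shift_sp :: "(int \<Rightarrow> bool) measure" where
  "shift_sp = PiM (UNIV :: int set) (\<lambda>_. count_space (UNIV :: bool set))"

definition shiftS :: "(int \<Rightarrow> bool) \<Rightarrow> (int \<Rightarrow> bool)" where
  "shiftS x = (\<lambda>n. x (n + 1))"

definition ergodic_shift_measure :: "(int \<Rightarrow> bool) measure \<Rightarrow> bool" where
  "ergodic_shift_measure k \<longleftrightarrow>
     prob_space k \<and> sets k = sets shift_sp \<and>
     distr k shift_sp shiftS = k \<and>
     (\<forall>A \<in> sets k. shiftS -` A = A \<longrightarrow> emeasure k A = 0 \<or> emeasure k A = 1)"

text \<open>The characteristic function of the B-free integers, B = {b i | i}.\<close>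
definition eta :: "(nat \<Rightarrow> nat) \<Rightarrow> int \<Rightarrow> bool" where
  "eta b n \<longleftrightarrow> (\<forall>i. \<not> int (b i) dvd n)"

definition X_eta :: "(nat \<Rightarrow> nat) \<Rightarrow> (int \<Rightarrow> bool) set" where
  "X_eta b = {y. \<forall>m n. m \<le> n \<longrightarrow> (\<exists>k. \<forall>j\<in>{m..n}. y j = eta b (j + k))}"

definition supp :: "(int \<Rightarrow> bool) \<Rightarrow> int set" where
  "supp y = {n. y n}"

definition Y_set :: "(nat \<Rightarrow> nat) \<Rightarrow> (int \<Rightarrow> bool) set" where
  "Y_set b = {x \<in> X_eta b. \<forall>i. card ((\<lambda>n. n mod int (b i)) ` supp x) = b i - 1}"

text \<open>Omega = prod_i Z/b_i Z with Haar measure (product of uniform measures on residues).\<close>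
definition Omega :: "(nat \<Rightarrow> nat) \<Rightarrow> (nat \<Rightarrow> int) measure" where
  "Omega b = PiM (UNIV :: nat set) (\<lambda>i. uniform_count_measure {0..<int (b i)})"

definition phi :: "(nat \<Rightarrow> nat) \<Rightarrow> (nat \<Rightarrow> int) \<Rightarrow> (int \<Rightarrow> bool)" where
  "phi b \<omega> = (\<lambda>n. \<forall>i. \<not> int (b i) dvd (\<omega> i + n))"

definition mirsky :: "(nat \<Rightarrow> nat) \<Rightarrow> (int \<Rightarrow> bool) measure" where
  "mirsky b = distr (Omega b) shift_sp (phi b)"

definition multM :: "(int \<Rightarrow> bool) \<times> (int \<Rightarrow> bool) \<Rightarrow> (int \<Rightarrow> bool)" where
  "multM p = (\<lambda>n. fst p n \<and> snd p n)"

definition conv_meas :: "(int \<Rightarrow> bool) measure \<Rightarrow> (int \<Rightarrow> bool) measure \<Rightarrow> (int \<Rightarrow> bool) measure" where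
  "conv_meas \<nu> k = distr (\<nu> \<Otimes>\<^sub>M k) shift_sp multM"

end

theory Submission
  imports Defs
begin


lemma space_shift_sp[simp]: "space shift_sp = UNIV"
  by (simp add: shift_sp_def space_PiM)

lemma meas_comp[measurable]: "(\<lambda>x. x n) \<in> measurable shift_sp (count_space UNIV)"
  unfolding shift_sp_def by measurable

lemma into_shift_sp:
  assumes "\<And>n. (\<lambda>x. f x n) \<in> measurable M (count_space UNIV)"
  shows "f \<in> measurable M shift_sp"
proof -
  have "f \<in> measurable M (PiM UNIV (\<lambda>_. count_space (UNIV::bool set)))"
    by (rule measurable_PiM_single') (use assms in auto)
  then show ?thesis by (simp only: shift_sp_def[symmetric])
qed

lemma multM_meas[measurable]: "multM \<in> measurable (shift_sp \<Otimes>\<^sub>M shift_sp) shift_sp"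
  unfolding multM_def
  by (rule into_shift_sp) measurable

lemma X_eta_meas[measurable]: "X_eta b \<in> sets shift_sp"
proof -
  have "X_eta b = {y \<in> space shift_sp. \<forall>m n. m \<le> n \<longrightarrow> (\<exists>k. \<forall>j\<in>{m..n}. y j = eta b (j + k))}"
    by (auto simp: X_eta_def)
  also have "\<dots> \<in> sets shift_sp" by measurable
  finally show ?thesis .
qed


lemma card_char:
  fixes x :: "int \<Rightarrow> bool" and b :: nat
  assumes "b \<ge> 2"
  shows "card ((\<lambda>n. n mod int b) ` supp x) = b - 1 \<longleftrightarrow>
    (\<exists>a\<in>{0..<int b}. (\<forall>n. x n \<longrightarrow> n mod int b \<noteq> a) \<and>
        (\<forall>r\<in>{0..<int b}. r \<noteq> a \<longrightarrow> (\<exists>n. x n \<and> n mod int b = r)))"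
    (is "card ?S = _ \<longleftrightarrow> _")
proof
  have sub: "?S \<subseteq> {0..<int b}" using assms by (auto simp: supp_def)
  have cb: "card {0..<int b} = b" by simp
  assume c: "card ?S = b - 1"
  then have "?S \<noteq> {0..<int b}" using cb assms by auto
  then obtain a where a: "a \<in> {0..<int b}" "a \<notin> ?S" using sub by blast
  have sub2: "?S \<subseteq> {0..<int b} - {a}" using sub a by auto
  have "card ({0..<int b} - {a}) = b - 1" using a cb by simp
  then have eq: "?S = {0..<int b} - {a}"
    using card_subset_eq[OF _ sub2] c by simp
  show "\<exists>a\<in>{0..<int b}. (\<forall>n. x n \<longrightarrow> n mod int b \<noteq> a) \<and>
        (\<forall>r\<in>{0..<int b}. r \<noteq> a \<longrightarrow> (\<exists>n. x n \<and> n mod int b = r))"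
  proof (intro bexI[OF _ a(1)] conjI allI impI ballI)
    fix n assume "x n" then show "n mod int b \<noteq> a" using a(2) by (auto simp: supp_def)
  next
    fix r assume "r \<in> {0..<int b}" "r \<noteq> a"
    then have "r \<in> ?S" using eq by auto
    then show "\<exists>n. x n \<and> n mod int b = r" by (auto simp: supp_def)
  qed
next
  assume "\<exists>a\<in>{0..<int b}. (\<forall>n. x n \<longrightarrow> n mod int b \<noteq> a) \<and>
        (\<forall>r\<in>{0..<int b}. r \<noteq> a \<longrightarrow> (\<exists>n. x n \<and> n mod int b = r))"
  then obtain a where a: "a \<in> {0..<int b}" "\<forall>n. x n \<longrightarrow> n mod int b \<noteq> a"
    "\<forall>r\<in>{0..<int b}. r \<noteq> a \<longrightarrow> (\<exists>n. x n \<and> n mod int b = r)" by blast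
  have "?S = {0..<int b} - {a}"
  proof
    show "?S \<subseteq> {0..<int b} - {a}" using a assms by (auto simp: supp_def)
    show "{0..<int b} - {a} \<subseteq> ?S"
    proof
      fix r assume "r \<in> {0..<int b} - {a}"
      then obtain n where "x n" "n mod int b = r" using a(3) by auto
      then show "r \<in> ?S" by (auto simp: supp_def)
    qed
  qed
  then show "card ?S = b - 1" using a by simp
qed

lemma Y_meas[measurable]:
  assumes "\<And>i. b i \<ge> 2"
  shows "Y_set b \<in> sets shift_sp"
proof -
  have "Y_set b = {x \<in> space shift_sp. x \<in> X_eta b \<and> (\<forall>i. \<exists>a\<in>{0..<int (b i)}. (\<forall>n. x n \<longrightarrow> n mod int (b i) \<noteq> a) \<and>
        (\<forall>r\<in>{0..<int (b i)}. r \<noteq> a \<longrightarrow> (\<exists>n. x n \<and> n mod int (b i) = r)))}"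
    unfolding Y_set_def using card_char[OF assms] by auto
  also have "\<dots> \<in> sets shift_sp" by measurable
  finally show ?thesis .
qed

definition good :: "(nat \<Rightarrow> nat) \<Rightarrow> (int \<Rightarrow> bool) \<Rightarrow> bool" where
  "good b y \<longleftrightarrow> (\<forall>i. \<exists>a\<in>{0..<int (b i)}. (\<forall>n. y n \<longrightarrow> n mod int (b i) \<noteq> a) \<and>
      (\<forall>r\<in>{0..<int (b i)}. r \<noteq> a \<longrightarrow> (\<forall>N::nat. \<exists>n::nat. N \<le> n \<and> int n mod int (b i) = r \<and> y (int n))))"

lemma good_meas[measurable]: "Measurable.pred shift_sp (good b)"
  unfolding good_def by measurable

lemma Omega_comp[measurable]: "(\<lambda>\<omega>. \<omega> i) \<in> measurable (Omega b) (count_space UNIV)"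
proof -
  have "(\<lambda>\<omega>. \<omega> i) \<in> Omega b \<rightarrow>\<^sub>M uniform_count_measure {0..<int (b i)}"
    unfolding Omega_def by (rule measurable_component_singleton) simp
  then have "(\<lambda>\<omega>. \<omega> i) \<in> Omega b \<rightarrow>\<^sub>M count_space {0..<int (b i)}"
    by (simp add: measurable_cong_sets[OF refl sets_uniform_count_measure_count_space])
  moreover have "(\<lambda>x. x) \<in> count_space {0..<int (b i)} \<rightarrow>\<^sub>M count_space UNIV" by simp
  ultimately show ?thesis by (rule measurable_compose)
qed

lemma phi_meas[measurable]: "phi b \<in> measurable (Omega b) shift_sp"
  unfolding phi_def by (rule into_shift_sp) measurable



lemma crt_int:
  fixes m u :: "'a \<Rightarrow> int"
  assumes "finite A" "\<forall>i\<in>A. \<forall>j\<in>A. i \<noteq> j \<longrightarrow> coprime (m i) (m j)"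
  shows "\<exists>x. \<forall>i\<in>A. m i dvd (x - u i)"
  using assms
proof (induction A rule: finite_induct)
  case empty then show ?case by simp
next
  case (insert a A)
  then obtain x0 where x0: "\<forall>i\<in>A. m i dvd (x0 - u i)" by auto
  define P where "P = (\<Prod>j\<in>A. m j)"
  have "coprime (m a) P" unfolding P_def
    using insert by (intro prod_coprime_right) auto
  then obtain s t where st: "s * m a + t * P = 1"
    using bezout_int[of "m a" P] by auto
  define x where "x = x0 + t * P * (u a - x0)"
  have "\<forall>i\<in>insert a A. m i dvd (x - u i)"
  proof
    fix i assume "i \<in> insert a A"
    then show "m i dvd (x - u i)"
    proof
      assume "i = a"
      have "x - u a = (x0 - u a) * (1 - t * P)" by (simp add: x_def algebra_simps)
      also have "1 - t * P = s * m a" using st by linarith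
      then have "(x0 - u a) * (1 - t * P) = (x0 - u a) * s * m a" by simp
      finally show ?thesis using \<open>i = a\<close> by simp
    next
      assume "i \<in> A"
      then have "m i dvd P" unfolding P_def using insert by (intro dvd_prodI) auto
      then have "m i dvd t * P * (u a - x0)" by simp
      moreover have "x - u i = (x0 - u i) + t * P * (u a - x0)" by (simp add: x_def)
      ultimately show ?thesis using x0 \<open>i \<in> A\<close> by (metis dvd_add)
    qed
  qed
  then show ?case by blast
qed

lemma bpos: "(\<And>i. b i \<ge> (2::nat)) \<Longrightarrow> 0 < b i"
  using order.strict_trans2[of 0 2 "b i"] by auto

lemma exists_avoid:
  fixes b :: "nat \<Rightarrow> nat" and c :: "nat \<Rightarrow> int"
  assumes b_ge: "\<And>i. b i \<ge> 2"
    and b_coprime: "\<And>i j. i \<noteq> j \<Longrightarrow> coprime (b i) (b j)"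
    and i0: "i0 < K" and r: "r \<in> {0..<int (b i0)}" and rc: "r \<noteq> (- c i0) mod int (b i0)"
  shows "\<exists>n::nat. N0 \<le> n \<and> int n mod int (b i0) = r \<and> (\<forall>j<K. \<not> int (b j) dvd c j + int n)"
proof -
  define u where "u j = (if j = i0 then r else 1 - c j)" for j
  have "\<exists>x. \<forall>j\<in>{..<K}. int (b j) dvd (x - u j)"
    by (rule crt_int) (use b_coprime in auto)
  then obtain x where x: "\<And>j. j < K \<Longrightarrow> int (b j) dvd (x - u j)" by auto
  define P where "P = (\<Prod>j<K. int (b j))"
  have Ppos: "P > 0" unfolding P_def using bpos[OF b_ge] by (intro prod_pos) auto
  define n where "n = nat (x mod P + int N0 * P)"
  have nint: "int n = x mod P + int N0 * P" unfolding n_def using Ppos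
    by (intro int_nat_eq[THEN trans]) (simp add: pos_mod_sign)
  have dP: "int (b j) dvd P" if "j < K" for j unfolding P_def using that by (intro dvd_prodI) auto
  have cong: "int (b j) dvd (int n - u j)" if "j < K" for j
  proof -
    have "int n - u j = (x - u j) - (x - x mod P) + int N0 * P" by (simp add: nint)
    moreover have "P dvd (x - x mod P)" by (simp add: mod_eq_0_iff_dvd minus_mod_eq_mult_div)
    moreover have "int (b j) dvd (x - x mod P)" using dP[OF that] calculation(2) by (rule dvd_trans)
    moreover have "int (b j) dvd int N0 * P" using dP[OF that] by simp
    ultimately show ?thesis using x[OF that] by (metis dvd_add dvd_diff)
  qed
  have "N0 \<le> n"
  proof -
    have "int N0 \<le> int N0 * P" using Ppos by (simp add: mult_le_cancel_left1)
    then have "int N0 \<le> int n" unfolding nint using Ppos pos_mod_sign[of P x] by linarith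
    then show ?thesis by simp
  qed
  moreover have "int n mod int (b i0) = r"
  proof -
    have "int (b i0) dvd (int n - r)" using cong[OF i0] by (simp add: u_def)
    then have "int n mod int (b i0) = r mod int (b i0)" by (simp add: mod_eq_dvd_iff)
    then show ?thesis using r by simp
  qed
  moreover have "\<not> int (b j) dvd c j + int n" if "j < K" for j
  proof
    assume d: "int (b j) dvd c j + int n"
    show False
    proof (cases "j = i0")
      case True
      have "int (b j) dvd int n - r" using cong[OF that] True by (simp add: u_def)
      then have "int (b j) dvd (c j + int n) - (int n - r)" using d by (rule dvd_diff[rotated])
      moreover have "(c j + int n) - (int n - r) = r - (- c j)" by simp
      ultimately have "int (b j) dvd r - (- c j)" by simp
      then have "r mod int (b j) = (- c j) mod int (b j)" by (simp add: mod_eq_dvd_iff)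
      then show False using r rc True by simp
    next
      case False
      have "int (b j) dvd int n - (1 - c j)" using cong[OF that] False by (simp add: u_def)
      then have "int (b j) dvd (c j + int n) - (int n - (1 - c j))" using d by (rule dvd_diff[rotated])
      moreover have "(c j + int n) - (int n - (1 - c j)) = 1" by simp
      ultimately have "int (b j) dvd 1" by simp
      then show False using b_ge[of j] by simp
    qed
  qed
  ultimately show ?thesis by blast
qed



lemma space_Omega: "space (Omega b) = PiE UNIV (\<lambda>j. {0..<int (b j)})"
  by (simp add: Omega_def space_PiM space_uniform_count_measure)

lemma res_set: "0 < b \<Longrightarrow> {z\<in>{0..<int b}. int b dvd z + n} = {(-n) mod int b}"
proof (intro set_eqI iffI)
  fix z assume b: "0 < b" and z: "z \<in> {z\<in>{0..<int b}. int b dvd z + n}"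
  then have "int b dvd z - (-n)" by simp
  then have "z mod int b = (-n) mod int b" using mod_eq_dvd_iff by blast
  moreover have "z mod int b = z" using z by simp
  ultimately show "z \<in> {(-n) mod int b}" by simp
next
  fix z assume b: "0 < b" and z: "z \<in> {(-n) mod int b}"
  then have "z mod int b = (-n) mod int b" by simp
  then have "int b dvd z - (-n)" by (simp add: mod_eq_dvd_iff)
  then show "z \<in> {z\<in>{0..<int b}. int b dvd z + n}" using z b by simp
qed

definition Fset :: "(nat \<Rightarrow> nat) \<Rightarrow> nat \<Rightarrow> int \<Rightarrow> nat \<Rightarrow> (nat \<Rightarrow> int) set" where
  "Fset b i0 r N0 = {\<omega> \<in> space (Omega b). r \<in> {0..<int (b i0)} \<and> r \<noteq> (- \<omega> i0) mod int (b i0) \<and>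
      (\<forall>n::nat. N0 \<le> n \<longrightarrow> int n mod int (b i0) = r \<longrightarrow> \<not> phi b \<omega> (int n))}"

lemma Fset_meas[measurable]: "Fset b i0 r N0 \<in> sets (Omega b)"
  unfolding Fset_def by measurable

lemma Fset_null:
  fixes b :: "nat \<Rightarrow> nat"
  assumes b_ge: "\<And>i. b i \<ge> 2"
    and b_coprime: "\<And>i j. i \<noteq> j \<Longrightarrow> coprime (b i) (b j)"
    and b_summable: "summable (\<lambda>i. 1 / real (b i))"
  shows "emeasure (Omega b) (Fset b i0 r N0) = 0"
proof (rule antisym[OF ennreal_le_epsilon])
  define M where "M j = uniform_count_measure {0..<int (b j)}" for j
  have Om: "Omega b = PiM UNIV M" unfolding Omega_def
    by (rule arg_cong[where f="PiM UNIV"]) (simp add: fun_eq_iff M_def)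
  have bp: "0 < b j" for j using bpos[OF b_ge] .
  have Mp: "prob_space (M j)" for j unfolding M_def
    by (rule prob_space_uniform_count_measure) (use bp[of j] in auto)
  fix e :: real assume e: "0 < e"
  obtain K0 where K0: "\<forall>K\<ge>K0. norm (\<Sum>i. 1 / real (b (i + K))) < e"
    using suminf_exist_split[OF e b_summable] by blast
  define K where "K = max K0 (Suc i0)"
  have i0K: "i0 < K" by (simp add: K_def)
  define T where "T = (\<Sum>i. 1 / real (b (i + K)))"
  have sumT: "summable (\<lambda>i. 1 / real (b (i + K)))" using b_summable by (subst summable_iff_shift) 
  have T0: "0 \<le> T" unfolding T_def by (rule suminf_nonneg[OF sumT]) simp
  have Te: "T < e" using K0[rule_format, of K] T0 by (simp add: K_def T_def)
  define J where "J = {..<K}"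
  define C where "C = PiE J (\<lambda>j. {0..<int (b j)})"
  define nc where "nc c = (SOME n::nat. N0 \<le> n \<and> int n mod int (b i0) = r \<and> (\<forall>j<K. \<not> int (b j) dvd c j + int n))" for c :: "nat \<Rightarrow> int"
  define E where "E c m = {\<omega>\<in>space (Omega b). (\<forall>j\<in>J. \<omega> j = c j) \<and> int (b (m+K)) dvd \<omega> (m+K) + int (nc c)}" for c m
  have Em[measurable]: "E c m \<in> sets (Omega b)" for c m unfolding E_def by measurable
  have cover: "Fset b i0 r N0 \<subseteq> (\<Union>c\<in>C. \<Union>m. E c m)"
  proof
    fix \<omega> assume w: "\<omega> \<in> Fset b i0 r N0"
    then have ws: "\<omega> \<in> space (Omega b)" and r: "r \<in> {0..<int (b i0)}" and rc: "r \<noteq> (- \<omega> i0) mod int (b i0)"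
      and nphi: "\<And>n. N0 \<le> n \<Longrightarrow> int n mod int (b i0) = r \<Longrightarrow> \<not> phi b \<omega> (int n)"
      unfolding Fset_def by auto
    define c where "c = restrict \<omega> J"
    have cC: "c \<in> C" using ws unfolding c_def C_def space_Omega by auto
    have ci0: "c i0 = \<omega> i0" using i0K by (simp add: c_def J_def)
    have ex: "\<exists>n::nat. N0 \<le> n \<and> int n mod int (b i0) = r \<and> (\<forall>j<K. \<not> int (b j) dvd c j + int n)"
      using exists_avoid[of b i0 K r c N0, OF b_ge b_coprime i0K r] rc ci0 by simp
    have nc: "N0 \<le> nc c" "int (nc c) mod int (b i0) = r" "\<And>j. j < K \<Longrightarrow> \<not> int (b j) dvd c j + int (nc c)"
      using someI_ex[OF ex] unfolding nc_def by blast+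
    have "\<not> phi b \<omega> (int (nc c))" using nphi nc by blast
    then obtain i where i: "int (b i) dvd \<omega> i + int (nc c)" unfolding phi_def by blast
    have "\<not> i < K"
    proof
      assume "i < K" then have "\<omega> i = c i" by (simp add: c_def J_def)
      then show False using i nc(3) \<open>i < K\<close> by simp
    qed
    then have "\<omega> \<in> E c (i - K)" using ws i unfolding E_def c_def by auto
    then show "\<omega> \<in> (\<Union>c\<in>C. \<Union>m. E c m)" using cC by blast
  qed
  define p where "p = (\<Prod>j\<in>J. 1 / real (b j))"
  have Emeas: "emeasure (Omega b) (E c m) = ennreal p * ennreal (1 / real (b (m + K)))" if cC: "c \<in> C" for c m
  proof -
    define X where "X j = (if j = m + K then {z\<in>{0..<int (b j)}. int (b j) dvd z + int (nc c)} else {c j})" for j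
    have mK: "m + K \<notin> J" by (simp add: J_def)
    have "E c m = prod_emb UNIV M (insert (m+K) J) (PiE (insert (m+K) J) X)"
    proof -
      have jne: "j \<in> J \<Longrightarrow> (j = m + K) \<longleftrightarrow> False" for j using mK by auto
      show ?thesis
        unfolding E_def prod_emb_def space_Omega X_def using mK
        by (auto simp: M_def PiE_iff space_Omega space_uniform_count_measure jne)
    qed
    moreover have "emeasure (PiM UNIV M) (prod_emb UNIV M (insert (m+K) J) (PiE (insert (m+K) J) X)) = (\<Prod>j\<in>insert (m+K) J. emeasure (M j) (X j))"
    proof (rule emeasure_PiM_emb)
      fix j assume j: "j \<in> insert (m+K) J"
      show "X j \<in> sets (M j)"
      proof (cases "j = m + K")
        case True then show ?thesis by (auto simp: X_def M_def sets_uniform_count_measure)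
      next
        case False
        then have "j \<in> J" using j by simp
        then have "c j \<in> {0..<int (b j)}" using cC by (auto simp: C_def)
        then show ?thesis using False by (auto simp: X_def M_def sets_uniform_count_measure)
      qed
    qed (auto simp: Mp J_def)
    ultimately have "emeasure (Omega b) (E c m) = (\<Prod>j\<in>insert (m+K) J. emeasure (M j) (X j))"
      unfolding Om by simp
    also have "\<dots> = emeasure (M (m+K)) (X (m+K)) * (\<Prod>j\<in>J. emeasure (M j) (X j))"
      using mK by (simp add: J_def)
    also have "emeasure (M (m+K)) (X (m+K)) = ennreal (1 / real (b (m + K)))"
    proof -
      have X1: "X (m+K) = {(- int (nc c)) mod int (b (m+K))}" unfolding X_def using res_set[OF bp] by simp
      have "(- int (nc c)) mod int (b (m+K)) \<in> {0..<int (b (m+K))}" using bp[of "m+K"] by simp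
      then show ?thesis unfolding M_def X1 using bp[of "m+K"]
        by (simp add: emeasure_uniform_count_measure ennreal_of_nat_eq_real_of_nat divide_ennreal)
    qed
    also have "(\<Prod>j\<in>J. emeasure (M j) (X j)) = (\<Prod>j\<in>J. ennreal (1 / real (b j)))"
    proof (rule prod.cong[OF refl])
      fix j assume "j \<in> J"
      then have "c j \<in> {0..<int (b j)}" "j \<noteq> m + K" using cC mK by (auto simp: C_def)
      then show "emeasure (M j) (X j) = ennreal (1 / real (b j))"
        unfolding M_def X_def using bp
        by (simp add: emeasure_uniform_count_measure ennreal_of_nat_eq_real_of_nat divide_ennreal)
    qed
    also have "\<dots> = ennreal p" unfolding p_def by (rule prod_ennreal) simp
    finally show ?thesis by (simp add: mult.commute)
  qed
  have cardC: "real (card C) * p = 1"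
  proof -
    have "card C = (\<Prod>j\<in>J. b j)" unfolding C_def by (simp add: card_PiE J_def)
    then have "real (card C) = (\<Prod>j\<in>J. real (b j))" by simp
    then have "real (card C) * p = (\<Prod>j\<in>J. real (b j) * (1 / real (b j)))"
      unfolding p_def by (simp only: prod.distrib)
    also have "\<dots> = 1"
    proof (rule prod.neutral, rule ballI)
      fix j have "real (b j) \<noteq> 0" using bp[of j] by simp
      then show "real (b j) * (1 / real (b j)) = 1" by simp
    qed
    finally show ?thesis .
  qed
  have UNm: "(\<Union>m. E c m) \<in> sets (Omega b)" for c
    by (rule sets.countable_UN) (use Em in blast)
  have UNC: "(\<Union>c\<in>C. \<Union>m. E c m) \<in> sets (Omega b)"
    by (rule sets.finite_UN[OF _ UNm]) (simp add: C_def J_def finite_PiE)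
  have "emeasure (Omega b) (Fset b i0 r N0) \<le> emeasure (Omega b) (\<Union>c\<in>C. \<Union>m. E c m)"
    by (rule emeasure_mono[OF cover UNC])
  also have "\<dots> \<le> (\<Sum>c\<in>C. emeasure (Omega b) (\<Union>m. E c m))"
    apply (rule emeasure_subadditive_finite)
     apply (simp add: C_def J_def finite_PiE)
    using UNm by blast
  also have "\<dots> \<le> (\<Sum>c\<in>C. (\<Sum>m. emeasure (Omega b) (E c m)))"
    by (rule sum_mono, rule emeasure_subadditive_countably) (use Em in blast)
  also have "\<dots> = (\<Sum>c\<in>C. ennreal p * ennreal T)"
  proof (rule sum.cong[OF refl])
    fix c assume "c \<in> C"
    then have "(\<Sum>m. emeasure (Omega b) (E c m)) = (\<Sum>m. ennreal p * ennreal (1 / real (b (m + K))))"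
      using Emeas by simp
    also have "\<dots> = ennreal p * ennreal T"
      unfolding T_def by (simp add: suminf_ennreal2[OF _ sumT])
    finally show "(\<Sum>m. emeasure (Omega b) (E c m)) = ennreal p * ennreal T" .
  qed
  also have "\<dots> = of_nat (card C) * (ennreal p * ennreal T)" by (rule sum_constant)
  also have "\<dots> = ennreal (real (card C) * p * T)"
  proof -
    have p0: "0 \<le> p" by (simp add: p_def prod_nonneg)
    have "ennreal (real (card C) * p * T) = ennreal (real (card C)) * (ennreal p * ennreal T)"
      using p0 T0 by (simp add: ennreal_mult' mult.assoc)
    then show ?thesis by (simp add: ennreal_of_nat_eq_real_of_nat)
  qed
  also have "\<dots> = ennreal T" using cardC by simp
  also have "\<dots> \<le> 0 + ennreal e" using Te by (simp add: ennreal_leI)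
  finally show "emeasure (Omega b) (Fset b i0 r N0) \<le> 0 + ennreal e" .
qed simp

lemma good_ae:
  fixes b :: "nat \<Rightarrow> nat"
  assumes b_ge: "\<And>i. b i \<ge> 2"
    and b_coprime: "\<And>i j. i \<noteq> j \<Longrightarrow> coprime (b i) (b j)"
    and b_summable: "summable (\<lambda>i. 1 / real (b i))"
  shows "AE \<omega> in Omega b. good b (phi b \<omega>)"
proof -
  have ae: "AE \<omega> in Omega b. \<forall>i r N. \<omega> \<notin> Fset b i r N"
    unfolding AE_all_countable
  proof (intro allI)
    fix i r N
    have "Fset b i r N \<in> null_sets (Omega b)"
      using Fset_null[OF b_ge b_coprime b_summable] by (simp add: null_sets_def)
    then show "AE \<omega> in Omega b. \<omega> \<notin> Fset b i r N" by (rule AE_I') auto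
  qed
  show ?thesis
    using ae AE_space
  proof (eventually_elim)
    fix \<omega> assume w: "\<forall>i r N. \<omega> \<notin> Fset b i r N" and ws: "\<omega> \<in> space (Omega b)"
    show "good b (phi b \<omega>)" unfolding good_def
    proof
      fix i
      have bp: "0 < b i" using bpos[OF b_ge] .
      define a where "a = (- \<omega> i) mod int (b i)"
      show "\<exists>a\<in>{0..<int (b i)}. (\<forall>n. phi b \<omega> n \<longrightarrow> n mod int (b i) \<noteq> a) \<and>
        (\<forall>r\<in>{0..<int (b i)}. r \<noteq> a \<longrightarrow> (\<forall>N::nat. \<exists>n::nat. N \<le> n \<and> int n mod int (b i) = r \<and> phi b \<omega> (int n)))"
      proof (intro bexI[of _ a] conjI allI impI ballI)
        show "a \<in> {0..<int (b i)}" using bp by (simp add: a_def)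
      next
        fix n assume p: "phi b \<omega> n"
        show "n mod int (b i) \<noteq> a"
        proof
          assume "n mod int (b i) = a"
          then have "int (b i) dvd n - (- \<omega> i)" unfolding a_def using mod_eq_dvd_iff by blast
          then have "int (b i) dvd \<omega> i + n" by (simp add: add.commute)
          then show False using p unfolding phi_def by blast
        qed
      next
        fix r N assume r: "r \<in> {0..<int (b i)}" "r \<noteq> a"
        have "\<omega> \<notin> Fset b i r N" using w by blast
        then show "\<exists>n::nat. N \<le> n \<and> int n mod int (b i) = r \<and> phi b \<omega> (int n)"
          using ws r unfolding Fset_def a_def by auto
      qed
    qed
  qed
qed



lemma b_inj:
  fixes b :: "nat \<Rightarrow> nat"
  assumes b_ge: "\<And>i. b i \<ge> 2" and b_coprime: "\<And>i j. i \<noteq> j \<Longrightarrow> coprime (b i) (b j)"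
  shows "inj b"
proof (rule injI)
  fix i j assume e: "b i = b j"
  show "i = j"
  proof (rule ccontr)
    assume "i \<noteq> j"
    then have "coprime (b i) (b i)" using b_coprime e by metis
    then have "b i = 1" by simp
    then show False using b_ge[of i] by simp
  qed
qed

lemma tail_bound:
  fixes f :: "nat \<Rightarrow> real"
  assumes f: "summable f" "\<And>i. 0 \<le> f i" and S: "finite S" "\<And>i. i \<in> S \<Longrightarrow> K \<le> i"
  shows "sum f S \<le> (\<Sum>i. f (i + K))"
proof -
  have inj: "inj_on (\<lambda>i. i - K) S" using S(2) by (intro inj_onI) (metis le_add_diff_inverse2)
  have "sum f S = sum (\<lambda>i. f (i + K)) ((\<lambda>i. i - K) ` S)"
    by (subst sum.reindex[OF inj]) (use S(2) in simp)
  also have "\<dots> \<le> (\<Sum>i. f (i + K))"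
    by (rule sum_le_suminf) (use f S in \<open>auto simp: summable_iff_shift\<close>)
  finally show ?thesis .
qed

lemma count_dvd:
  fixes d :: nat and c Q :: int
  assumes d: "0 < d" and cop: "coprime (int d) Q"
  shows "real (card {t\<in>{..<N}. int d dvd c + Q * int t}) \<le> real N / real d + 1"
proof (cases "N = 0")
  case True then show ?thesis by simp
next
  case False
  define S where "S = {t\<in>{..<N}. int d dvd c + Q * int t}"
  have inj: "inj_on (\<lambda>t. t div d) S"
  proof (rule inj_onI)
    fix t1 t2 assume t: "t1 \<in> S" "t2 \<in> S" and e: "t1 div d = t2 div d"
    then have "int d dvd (c + Q * int t1) - (c + Q * int t2)" unfolding S_def by (intro dvd_diff) auto
    moreover have "(c + Q * int t1) - (c + Q * int t2) = Q * (int t1 - int t2)" by (simp add: algebra_simps)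
    ultimately have "int d dvd Q * (int t1 - int t2)" by simp
    then have "int d dvd int t1 - int t2" using cop by (simp add: coprime_dvd_mult_right_iff)
    then have "int t1 mod int d = int t2 mod int d" by (simp add: mod_eq_dvd_iff)
    then have "t1 mod d = t2 mod d" by (metis of_nat_eq_iff zmod_int)
    then show "t1 = t2" using e by (metis div_mult_mod_eq)
  qed
  have sub: "(\<lambda>t. t div d) ` S \<subseteq> {..(N - 1) div d}"
    unfolding S_def by (auto intro: div_le_mono)
  have "card S = card ((\<lambda>t. t div d) ` S)" using inj by (simp add: card_image)
  also have "\<dots> \<le> Suc ((N - 1) div d)" using card_mono[OF _ sub] by simp
  finally have cS: "card S \<le> Suc ((N - 1) div d)" .
  have "real ((N - 1) div d) * real d \<le> real (N - 1)"
  proof -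
    have "(N - 1) div d * d \<le> N - 1" using div_mult_mod_eq[of "N - 1" d] by linarith
    then show ?thesis by (metis of_nat_le_iff of_nat_mult)
  qed
  then have "real ((N - 1) div d) \<le> real (N - 1) / real d"
    using d by (simp add: le_divide_eq)
  also have "\<dots> \<le> real N / real d" using d by (simp add: divide_right_mono)
  finally show ?thesis using cS unfolding S_def by linarith
qed



lemma adm_block:
  fixes b :: "nat \<Rightarrow> nat" and x :: "int \<Rightarrow> bool" and a :: "nat \<Rightarrow> int"
  assumes b_ge: "\<And>i. b i \<ge> 2"
    and b_coprime: "\<And>i j. i \<noteq> j \<Longrightarrow> coprime (b i) (b j)"
    and b_summable: "summable (\<lambda>i. 1 / real (b i))"
    and adm: "\<And>i j. x j \<Longrightarrow> \<not> int (b i) dvd (j - a i)"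
    and mn: "m \<le> n"
  shows "\<exists>k. \<forall>j\<in>{m..n}. x j = eta b (j + k)"
proof -
  have bp: "0 < b i" for i using bpos[OF b_ge] .
  have binj: "inj b" using b_inj[OF b_ge b_coprime] .
  define f where "f i = 1 / real (b i)" for i
  have f0: "0 \<le> f i" for i by (simp add: f_def)
  have fs: "summable f" using b_summable by (simp add: f_def[abs_def])
  have tail0: "0 \<le> (\<Sum>i. f (i + K))" for K
    by (rule suminf_nonneg) (use fs f0 in \<open>auto simp: summable_iff_shift\<close>)
  define L where "L = nat (n - m) + 1"
  have L1: "1 \<le> L" by (simp add: L_def)
  obtain K where K: "(\<Sum>i. f (i + K)) < 1 / (4 * real L)"
  proof -
    have "0 < 1 / (4 * real L)" using L1 by simp
    from suminf_exist_split[OF this fs] obtain K where "\<forall>k\<ge>K. norm (\<Sum>i. f (i + k)) < 1 / (4 * real L)" by blast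
    then have "norm (\<Sum>i. f (i + K)) < 1 / (4 * real L)" by blast
    then show ?thesis using that tail0[of K] by simp
  qed
  define E where "E = {i. K \<le> i \<and> L < b i}"
  have Einf: "infinite E"
  proof -
    have "finite {i. b i \<le> L}"
    proof -
      have "{i. b i \<le> L} = b -` {..L}" by auto
      then show ?thesis using finite_vimageI[OF _ binj, of "{..L}"] by simp
    qed
    moreover have "E = {K..} - {i. b i \<le> L}" unfolding E_def by auto
    ultimately show ?thesis using Diff_infinite_finite[of "{i. b i \<le> L}" "{K..}"] infinite_Ici by simp
  qed
  define idx where "idx j = enumerate E (nat (j - m))" for j
  have idxE: "idx j \<in> E" for j unfolding idx_def using Einf by (rule enumerate_in_set)
  have idxK: "K \<le> idx j" for j using idxE[of j] by (simp add: E_def)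
  have idxL: "L < b (idx j)" for j using idxE[of j] by (simp add: E_def)
  have idx_inj: "j1 = j2" if "j1 \<in> {m..n}" "j2 \<in> {m..n}" "idx j1 = idx j2" for j1 j2
  proof -
    have "strict_mono (enumerate E)" using Einf by (rule strict_mono_enumerate)
    then have "nat (j1 - m) = nat (j2 - m)" using that(3) unfolding idx_def by (metis strict_mono_eq)
    moreover have "0 \<le> j1 - m" "0 \<le> j2 - m" using that(1,2) by auto
    ultimately have "j1 - m = j2 - m" using eq_nat_nat_iff by blast
    then show ?thesis by simp
  qed
  define Z where "Z = {j\<in>{m..n}. \<not> x j}"
  define Os where "Os = {j\<in>{m..n}. x j}"
  define A where "A = {..<K} \<union> idx ` Z"
  have finZ: "finite Z" unfolding Z_def by (rule finite_subset[of _ "{m..n}"]) auto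
  have finA: "finite A" unfolding A_def using finZ by simp
  define u where "u i = (if i < K then - a i else - (THE j. j \<in> Z \<and> idx j = i))" for i
  have uZ: "u (idx j) = - j" if "j \<in> Z" for j
  proof -
    have "\<not> idx j < K" using idxK[of j] by simp
    moreover have "(THE j'. j' \<in> Z \<and> idx j' = idx j) = j"
      by (rule the_equality) (use that idx_inj in \<open>auto simp: Z_def\<close>)
    ultimately show ?thesis by (simp add: u_def)
  qed
  have uK: "i < K \<Longrightarrow> u i = - a i" for i by (simp add: u_def)
  obtain c0 where c0: "\<And>i. i \<in> A \<Longrightarrow> int (b i) dvd (c0 - u i)"
    using crt_int[OF finA, of "\<lambda>i. int (b i)" u] b_coprime by auto
  define Q where "Q = (\<Prod>i\<in>A. int (b i))"
  have Qpos: "0 < Q" unfolding Q_def using bp by (intro prod_pos) auto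
  have bQ: "i \<in> A \<Longrightarrow> int (b i) dvd Q" for i unfolding Q_def using finA by (intro dvd_prodI)
  define c where "c = c0 mod Q + Q * (\<bar>m\<bar> + 1)"
  have cQ: "Q dvd c - c0"
  proof -
    have "c - c0 = Q * (\<bar>m\<bar> + 1 - c0 div Q)"
      unfolding c_def using div_mult_mod_eq[of c0 Q] by (simp add: algebra_simps)
    then show ?thesis by simp
  qed
  have cpos: "0 < c + m"
  proof -
    have "\<bar>m\<bar> + 1 \<le> Q * (\<bar>m\<bar> + 1)" using mult_right_mono[of 1 Q "\<bar>m\<bar>+1"] Qpos by simp
    moreover have "0 \<le> c0 mod Q" using Qpos by simp
    moreover have "- m \<le> \<bar>m\<bar>" by simp
    ultimately show ?thesis unfolding c_def by linarith
  qed
  define k where "k t = c + Q * int t" for t :: nat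
  have kcong: "int (b i) dvd (k t - u i)" if "i \<in> A" for i t
  proof -
    have "k t - u i = (c - c0) + Q * int t + (c0 - u i)" by (simp add: k_def)
    moreover have "int (b i) dvd c - c0" using bQ[OF that] cQ by (rule dvd_trans)
    moreover have "int (b i) dvd Q * int t" using bQ[OF that] by simp
    ultimately show ?thesis using c0[OF that] by (metis dvd_add)
  qed
  have caseZ: "int (b (idx j)) dvd j + k t" if "j \<in> Z" for j t
  proof -
    have "idx j \<in> A" using that by (simp add: A_def)
    from kcong[OF this, of t] show ?thesis using uZ[OF that] by (simp add: add.commute)
  qed
  have caseK: "\<not> int (b i) dvd j + k t" if "x j" "i < K" for i j t
  proof
    assume d: "int (b i) dvd j + k t"
    have "i \<in> A" using that by (simp add: A_def)
    from kcong[OF this, of t] have "int (b i) dvd k t + a i" using uK[OF that(2)] by simp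
    then have "int (b i) dvd (j + k t) - (k t + a i)" using d by (intro dvd_diff)
    moreover have "(j + k t) - (k t + a i) = j - a i" by simp
    ultimately show False using adm[OF that(1)] by simp
  qed
  have caseI: "\<not> int (b (idx j')) dvd j + k t" if "j \<in> Os" "j' \<in> Z" for j j' t
  proof
    assume d: "int (b (idx j')) dvd j + k t"
    have "int (b (idx j')) dvd (j + k t) - (j' + k t)" using d caseZ[OF that(2)] by (intro dvd_diff)
    then have dd: "int (b (idx j')) dvd j - j'" by simp
    have "j \<noteq> j'" using that by (auto simp: Os_def Z_def)
    then have "\<bar>int (b (idx j'))\<bar> \<le> \<bar>j - j'\<bar>" using dd by (intro dvd_imp_le_int) auto
    moreover have "\<bar>j - j'\<bar> \<le> n - m" using that by (auto simp: Os_def Z_def)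
    moreover have "n - m < int L" by (simp add: L_def)
    ultimately show False using idxL[of j'] by simp
  qed
  define D where "D = n + c + Q + 1"
  have nc0: "0 \<le> n + c" using cpos mn by simp
  have Dpos: "0 < real_of_int D" unfolding D_def using nc0 Qpos by simp
  obtain K' where K': "(\<Sum>i. f (i + K')) < 1 / (4 * real L * real_of_int D)"
  proof -
    have "0 < 1 / (4 * real L * real_of_int D)" using L1 Dpos by simp
    from suminf_exist_split[OF this fs] obtain K' where "\<forall>k\<ge>K'. norm (\<Sum>i. f (i + k)) < 1 / (4 * real L * real_of_int D)" by blast
    then have "norm (\<Sum>i. f (i + K')) < 1 / (4 * real L * real_of_int D)" by blast
    then show ?thesis using that tail0[of K'] by simp
  qed
  define N where "N = 2 * L * K' + 1"
  define W where "W = n + c + Q * int N"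
  define G where "G = {i. i \<notin> A \<and> b i \<le> nat W}"
  have finG: "finite G"
  proof -
    have "G \<subseteq> b -` {..nat W}" by (auto simp: G_def)
    then show ?thesis using finite_vimageI[OF _ binj, of "{..nat W}"] finite_subset by blast
  qed
  have GK: "i \<in> G \<Longrightarrow> K \<le> i" for i by (auto simp: G_def A_def)
  define B where "B = {t\<in>{..<N}. \<exists>j\<in>Os. \<exists>i. i \<notin> A \<and> int (b i) dvd j + k t}"
  define BB where "BB j i = {t\<in>{..<N}. int (b i) dvd (j + c) + Q * int t}" for j i
  have Bsub: "B \<subseteq> (\<Union>j\<in>Os. \<Union>i\<in>G. BB j i)"
  proof
    fix t assume "t \<in> B"
    then obtain j i where t: "t < N" "j \<in> Os" "i \<notin> A" "int (b i) dvd j + k t" unfolding B_def by auto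
    have q0: "0 \<le> Q * int t" using Qpos by simp
    have qN: "Q * int t \<le> Q * int N" using Qpos t(1) by (intro mult_left_mono) auto
    have jr: "m \<le> j" "j \<le> n" using t(2) by (auto simp: Os_def)
    have pos: "0 < j + k t" using jr cpos q0 unfolding k_def by linarith
    have "j + k t \<le> W" using jr qN unfolding k_def W_def by linarith
    moreover have "int (b i) \<le> j + k t" using pos t(4) by (simp add: zdvd_imp_le)
    ultimately have "i \<in> G" using t(3) by (auto simp: G_def)
    moreover have "t \<in> BB j i" using t by (simp add: BB_def k_def add.assoc)
    ultimately show "t \<in> (\<Union>j\<in>Os. \<Union>i\<in>G. BB j i)" using t(2) by blast
  qed
  have BBb: "real (card (BB j i)) \<le> real N * f i + 1" if "i \<in> G" for j i
  proof -
    have "coprime (int (b i)) Q"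
      unfolding Q_def
    proof (rule prod_coprime_right)
      fix i' assume "i' \<in> A"
      then have "i \<noteq> i'" using that by (auto simp: G_def)
      then show "coprime (int (b i)) (int (b i'))" using b_coprime by simp
    qed
    from count_dvd[OF bp this] show ?thesis unfolding BB_def f_def by simp
  qed
  have finO: "finite Os" unfolding Os_def by (rule finite_subset[of _ "{m..n}"]) auto
  have cardO: "card Os \<le> L"
  proof -
    have "card Os \<le> card {m..n}" by (rule card_mono) (auto simp: Os_def)
    then show ?thesis by (simp add: L_def)
  qed
  have "real (card B) \<le> real (card (\<Union>j\<in>Os. \<Union>i\<in>G. BB j i))"
  proof (intro of_nat_mono card_mono Bsub)
    have "(\<Union>j\<in>Os. \<Union>i\<in>G. BB j i) \<subseteq> {..<N}" by (auto simp: BB_def)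
    then show "finite (\<Union>j\<in>Os. \<Union>i\<in>G. BB j i)" by (rule finite_subset) simp
  qed
  also have "\<dots> \<le> real (\<Sum>j\<in>Os. card (\<Union>i\<in>G. BB j i))" by (intro of_nat_mono card_UN_le finO)
  also have "\<dots> \<le> (\<Sum>j\<in>Os. (\<Sum>i\<in>G. real (card (BB j i))))"
    unfolding of_nat_sum by (intro sum_mono) (metis card_UN_le finG of_nat_le_iff of_nat_sum)
  also have "\<dots> \<le> (\<Sum>j\<in>Os. (\<Sum>i\<in>G. real N * f i + 1))"
    by (intro sum_mono BBb)
  also have "\<dots> = real (card Os) * (\<Sum>i\<in>G. real N * f i + 1)" by simp
  also have "\<dots> \<le> real L * (\<Sum>i\<in>G. real N * f i + 1)"
    by (intro mult_right_mono) (use cardO f0 in \<open>auto intro: sum_nonneg\<close>)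
  finally have cB: "real (card B) \<le> real L * (\<Sum>i\<in>G. real N * f i + 1)" .
  define G1 where "G1 = G \<inter> {..<K'}"
  define G2 where "G2 = G - {..<K'}"
  have "(\<Sum>i\<in>G. real N * f i + 1) = (\<Sum>i\<in>G1. real N * f i + 1) + (\<Sum>i\<in>G2. real N * f i + 1)"
    unfolding G1_def G2_def using finG by (rule sum.Int_Diff)
  also have "(\<Sum>i\<in>G1. real N * f i + 1) \<le> real N * (\<Sum>i. f (i + K)) + real K'"
  proof -
    have "(\<Sum>i\<in>G1. real N * f i + 1) = real N * (\<Sum>i\<in>G1. f i) + real (card G1)"
      by (simp add: sum.distrib sum_distrib_left)
    moreover have "(\<Sum>i\<in>G1. f i) \<le> (\<Sum>i. f (i + K))"
      by (rule tail_bound[OF fs f0]) (use finG GK in \<open>auto simp: G1_def\<close>)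
    then have "real N * (\<Sum>i\<in>G1. f i) \<le> real N * (\<Sum>i. f (i + K))" by (rule mult_left_mono) simp
    moreover have "card G1 \<le> K'"
      using card_mono[of "{..<K'}" G1] by (auto simp: G1_def)
    then have "real (card G1) \<le> real K'" by simp
    ultimately show ?thesis by linarith
  qed
  also have "(\<Sum>i\<in>G2. real N * f i + 1) \<le> (real N + real_of_int W) * (\<Sum>i. f (i + K'))"
  proof -
    have "(\<Sum>i\<in>G2. real N * f i + 1) \<le> (\<Sum>i\<in>G2. (real N + real_of_int W) * f i)"
    proof (rule sum_mono)
      fix i assume "i \<in> G2"
      then have "b i \<le> nat W" by (simp add: G2_def G_def)
      then have bW: "real (b i) \<le> real_of_int W" using bp[of i] by linarith
      have "1 = real (b i) * f i" using bp[of i] by (simp add: f_def)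
      also have "\<dots> \<le> real_of_int W * f i" using bW f0 by (simp add: mult_right_mono)
      finally show "real N * f i + 1 \<le> (real N + real_of_int W) * f i" by (simp add: algebra_simps)
    qed
    also have "\<dots> = (real N + real_of_int W) * (\<Sum>i\<in>G2. f i)" by (simp add: sum_distrib_left)
    also have "\<dots> \<le> (real N + real_of_int W) * (\<Sum>i. f (i + K'))"
    proof (rule mult_left_mono)
      show "(\<Sum>i\<in>G2. f i) \<le> (\<Sum>i. f (i + K'))"
        by (rule tail_bound[OF fs f0]) (use finG in \<open>auto simp: G2_def\<close>)
      show "0 \<le> real N + real_of_int W" using nc0 Qpos by (simp add: W_def)
    qed
    finally show ?thesis .
  qed
  finally have sG: "(\<Sum>i\<in>G. real N * f i + 1) \<le> real N * (\<Sum>i. f (i + K)) + real K' + (real N + real_of_int W) * (\<Sum>i. f (i + K'))"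
    by simp
  have N1: "1 \<le> N" by (simp add: N_def)
  have NW: "real N + real_of_int W \<le> real_of_int D * real N"
  proof -
    have "real_of_int (n + c) \<le> real_of_int (n + c) * real N" using nc0 N1
      by (simp add: mult_le_cancel_left1)
    then show ?thesis unfolding W_def D_def by (simp add: algebra_simps)
  qed
  have t1: "real L * (real N * (\<Sum>i. f (i + K))) < real N / 4"
  proof -
    have "real L * (\<Sum>i. f (i + K)) < real L * (1 / (4 * real L))"
      by (rule mult_strict_left_mono[OF K]) (use L1 in simp)
    also have "\<dots> = 1 / 4" using L1 by simp
    finally have "real L * (\<Sum>i. f (i + K)) < 1/4" .
    then have "real N * (real L * (\<Sum>i. f (i + K))) < real N * (1/4)" using N1 by simp
    then show ?thesis by (simp add: algebra_simps)
  qed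
  have t2: "real L * ((real N + real_of_int W) * (\<Sum>i. f (i + K'))) \<le> real N / 4"
  proof -
    have "real L * ((real N + real_of_int W) * (\<Sum>i. f (i + K'))) \<le> real L * ((real_of_int D * real N) * (\<Sum>i. f (i + K')))"
      using NW tail0[of K'] L1 by (intro mult_left_mono mult_right_mono) auto
    also have "\<dots> = real N * (real L * real_of_int D * (\<Sum>i. f (i + K')))" by (simp add: algebra_simps)
    also have "\<dots> \<le> real N * (real L * real_of_int D * (1 / (4 * real L * real_of_int D)))"
      using K' L1 Dpos by (intro mult_left_mono) auto
    also have "\<dots> = real N / 4" using L1 Dpos by simp
    finally show ?thesis .
  qed
  have t3: "real L * real K' < real N / 2" by (simp add: N_def)
  have "real (card B) < real N"
  proof -
    have "real (card B) \<le> real L * (real N * (\<Sum>i. f (i + K)) + real K' + (real N + real_of_int W) * (\<Sum>i. f (i + K')))"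
      using cB mult_left_mono[OF sG, of "real L"] by simp
    also have "\<dots> = real L * (real N * (\<Sum>i. f (i + K))) + real L * real K' + real L * ((real N + real_of_int W) * (\<Sum>i. f (i + K')))"
      by (simp add: algebra_simps)
    also have "\<dots> < real N" using t1 t2 t3 by linarith
    finally show ?thesis .
  qed
  then have "card B < N" by simp
  moreover have "B \<subseteq> {..<N}" by (auto simp: B_def)
  ultimately have "B \<noteq> {..<N}" by auto
  then obtain t where t: "t < N" "t \<notin> B" using \<open>B \<subseteq> {..<N}\<close> by blast
  show ?thesis
  proof (intro exI[of _ "k t"] ballI)
    fix j assume j: "j \<in> {m..n}"
    show "x j = eta b (j + k t)"
    proof (cases "x j")
      case True
      then have jO: "j \<in> Os" using j by (simp add: Os_def)
      have "\<not> int (b i) dvd j + k t" for i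
      proof (cases "i \<in> A")
        case True
        then show ?thesis
        proof (cases "i < K")
          case True then show ?thesis using caseK \<open>x j\<close> by blast
        next
          case False
          then obtain j' where "j' \<in> Z" "i = idx j'" using \<open>i \<in> A\<close> by (auto simp: A_def)
          then show ?thesis using caseI[OF jO] by blast
        qed
      next
        case False
        then show ?thesis using t jO unfolding B_def by blast
      qed
      then show ?thesis using True by (simp add: eta_def)
    next
      case False
      then have "j \<in> Z" using j by (simp add: Z_def)
      then show ?thesis using caseZ False by (auto simp: eta_def)
    qed
  qed
qed

lemma adm_X_eta:
  fixes b :: "nat \<Rightarrow> nat" and x :: "int \<Rightarrow> bool" and a :: "nat \<Rightarrow> int"
  assumes b_ge: "\<And>i. b i \<ge> 2"
    and b_coprime: "\<And>i j. i \<noteq> j \<Longrightarrow> coprime (b i) (b j)"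
    and b_summable: "summable (\<lambda>i. 1 / real (b i))"
    and adm: "\<And>i j. x j \<Longrightarrow> \<not> int (b i) dvd (j - a i)"
  shows "x \<in> X_eta b"
  unfolding X_eta_def using adm_block[OF b_ge b_coprime b_summable adm] by blast

lemma fixed_y:
  fixes b :: "nat \<Rightarrow> nat" and k :: "(int \<Rightarrow> bool) measure"
  assumes b_ge: "\<And>i. b i \<ge> 2"
    and b_coprime: "\<And>i j. i \<noteq> j \<Longrightarrow> coprime (b i) (b j)"
    and b_summable: "summable (\<lambda>i. 1 / real (b i))"
    and k_sets: "sets k = sets shift_sp"
    and k_zero: "\<And>t :: nat \<Rightarrow> nat. strict_mono t \<Longrightarrow>
                   emeasure k {v. \<forall>m. \<not> v (int (t m))} = 0"
    and g: "good b y"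
  shows "AE v in k. multM (y, v) \<in> Y_set b"
proof -
  from g obtain a where a: "\<And>i. a i \<in> {0..<int (b i)}"
    "\<And>i n. y n \<Longrightarrow> n mod int (b i) \<noteq> a i"
    "\<And>i r N. r \<in> {0..<int (b i)} \<Longrightarrow> r \<noteq> a i \<Longrightarrow> \<exists>n::nat. N \<le> n \<and> int n mod int (b i) = r \<and> y (int n)"
    unfolding good_def by metis
  define S where "S i r = {n::nat. int n mod int (b i) = r \<and> y (int n)}" for i r
  have ae: "AE v in k. \<forall>i r. r \<in> {0..<int (b i)} \<longrightarrow> r \<noteq> a i \<longrightarrow> (\<exists>n\<in>S i r. v (int n))"
    unfolding AE_all_countable
  proof (intro allI)
    fix i r
    show "AE v in k. r \<in> {0..<int (b i)} \<longrightarrow> r \<noteq> a i \<longrightarrow> (\<exists>n\<in>S i r. v (int n))"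
    proof (cases "r \<in> {0..<int (b i)} \<and> r \<noteq> a i")
      case False then show ?thesis by simp
    next
      case True
      have inf: "infinite (S i r)"
      proof (rule infinite_nat_iff_unbounded_le[THEN iffD2], intro allI)
        fix N obtain n where "N \<le> n" "int n mod int (b i) = r" "y (int n)" using a(3) True by blast
        then show "\<exists>n\<ge>N. n \<in> S i r" unfolding S_def by blast
      qed
      define t where "t = enumerate (S i r)"
      have sm: "strict_mono t" unfolding t_def using inf by (rule strict_mono_enumerate)
      have tin: "t m \<in> S i r" for m unfolding t_def using inf by (rule enumerate_in_set)
      have N: "{v. \<forall>m. \<not> v (int (t m))} \<in> null_sets k"
      proof -
        have "{v. \<forall>m. \<not> v (int (t m))} \<in> sets shift_sp"
        proof -
          have "{v. \<forall>m. \<not> v (int (t m))} = {v \<in> space shift_sp. \<forall>m. \<not> v (int (t m))}" by simp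
          also have "\<dots> \<in> sets shift_sp" by measurable
          finally show ?thesis .
        qed
        then show ?thesis using k_zero[OF sm] k_sets by (simp add: null_sets_def)
      qed
      show ?thesis
        by (rule AE_I'[OF N]) (use tin in blast)
    qed
  qed
  then show ?thesis
  proof (rule eventually_mono)
    fix v assume v: "\<forall>i r. r \<in> {0..<int (b i)} \<longrightarrow> r \<noteq> a i \<longrightarrow> (\<exists>n\<in>S i r. v (int n))"
    define x where "x = multM (y, v)"
    have xy: "x n \<Longrightarrow> y n" for n by (simp add: x_def multM_def)
    have admx: "\<not> int (b i) dvd (j - a i)" if "x j" for i j
    proof
      assume "int (b i) dvd (j - a i)"
      then have "j mod int (b i) = a i mod int (b i)" using mod_eq_dvd_iff by blast
      also have "\<dots> = a i" using a(1)[of i] by simp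
      finally show False using a(2)[of j i] xy[OF that] by blast
    qed
    have "x \<in> X_eta b"
      by (rule adm_X_eta[OF b_ge b_coprime b_summable admx])
    moreover have "card ((\<lambda>n. n mod int (b i)) ` supp x) = b i - 1" for i
      unfolding card_char[OF b_ge]
    proof (intro bexI[OF _ a(1)] conjI allI impI ballI)
      fix n assume "x n" then show "n mod int (b i) \<noteq> a i" using a(2) xy by blast
    next
      fix r assume "r \<in> {0..<int (b i)}" "r \<noteq> a i"
      then obtain n where "n \<in> S i r" "v (int n)" using v by blast
      then show "\<exists>n. x n \<and> n mod int (b i) = r"
        by (intro exI[of _ "int n"]) (auto simp: S_def x_def multM_def)
    qed
    ultimately show "multM (y, v) \<in> Y_set b" unfolding Y_set_def x_def by simp
  qed
qed

theorem mainTheorem4: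
  fixes b :: "nat \<Rightarrow> nat" and k :: "(int \<Rightarrow> bool) measure"
  assumes b_ge: "\<And>i. b i \<ge> 2"
    and b_coprime: "\<And>i j. i \<noteq> j \<Longrightarrow> coprime (b i) (b j)"
    and b_summable: "summable (\<lambda>i. 1 / real (b i))"
    and k_erg: "ergodic_shift_measure k"
    and k_zero: "\<And>t :: nat \<Rightarrow> nat. strict_mono t \<Longrightarrow>
                   emeasure k {v. \<forall>m. \<not> v (int (t m))} = 0"
  shows "emeasure (conv_meas (mirsky b) k) (Y_set b) = 1"
proof -
  have kp: "prob_space k" and k_sets[measurable_cong]: "sets k = sets shift_sp"
    using k_erg by (auto simp: ergodic_shift_measure_def)
  have Op: "prob_space (Omega b)" unfolding Omega_def
    by (rule prob_space_PiM, rule prob_space_uniform_count_measure) (use b_ge in \<open>auto intro: order.strict_trans2[of 0 2]\<close>)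
  have mp: "prob_space (mirsky b)" unfolding mirsky_def
    by (rule prob_space.prob_space_distr[OF Op phi_meas])
  have m_sets[measurable_cong]: "sets (mirsky b) = sets shift_sp" by (simp add: mirsky_def)
  interpret pk: pair_prob_space "mirsky b" k using mp kp by (simp add: pair_prob_space_def pair_sigma_finite_def prob_space_imp_sigma_finite)
  have mM[measurable]: "multM \<in> measurable (mirsky b \<Otimes>\<^sub>M k) shift_sp"
    using multM_meas by (simp add: measurable_cong_sets[OF sets_pair_measure_cong[OF m_sets k_sets] refl])
  have cp: "prob_space (conv_meas (mirsky b) k)" unfolding conv_meas_def
    by (rule prob_space.prob_space_distr[OF pk.prob_space_axioms mM])
  have Ym[measurable]: "Y_set b \<in> sets shift_sp" using Y_meas b_ge by blast
  have ae1: "AE y in mirsky b. good b y"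
    unfolding mirsky_def
    by (subst AE_distr_iff[OF phi_meas]) (measurable, rule good_ae[OF b_ge b_coprime b_summable])
  have ae2: "AE y in mirsky b. AE v in k. multM (y, v) \<in> Y_set b"
    using ae1 by (rule eventually_mono) (rule fixed_y[OF b_ge b_coprime b_summable k_sets k_zero])
  have ae3: "AE p in mirsky b \<Otimes>\<^sub>M k. multM p \<in> Y_set b"
    by (rule pk.AE_pair_measure[OF _ ae2]) measurable
  have "AE x in conv_meas (mirsky b) k. x \<in> Y_set b"
    unfolding conv_meas_def by (subst AE_distr_iff[OF mM]) (measurable, rule ae3)
  then show ?thesis
    by (intro prob_space.emeasure_eq_1_AE[OF cp]) (simp_all add: conv_meas_def)
qed
end
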